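(* Let $R$ be a commutative Noetherian ring with unity such that $\Gamma_E(R)$ has at least three vertices. If a vertex $[y]$ of $\Gamma_E(R)$ is adjacent to a leaf, then $\operatorname{ann}(y)$ is a maximal element of $\mathfrak F=\{\operatorname{ann}(z)\mid 0\neq z\in R\}$ and is an associated prime of $R$.
   Context: For $x,y\in R$ write $x\sim y$ iff $\operatorname{ann}(x)=\operatorname{ann}(y)$; $[x]$ denotes the equivalence class of $x$. Let $Z^*(R)$ be the set of nonzero zero divisors of $R$. The graph $\Gamma_E(R)$ is the simple graph whose vertices are the classes $[x]$ with $x\in Z^*(R)$, two distinct vertices $[x],[y]$ being adjacent iff $xy=0$. A leaf is a vertex of degree $1$. An associated prime of $R$ is a prime ideal of the form $\operatorname{ann}(y)$, $y\in R$. *)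

theory Defs
  imports "HOL-Algebra.Ring_Divisibility" "HOL-Algebra.Ideal"
begin

definition ann :: "('a, 'b) ring_scheme \<Rightarrow> 'a \<Rightarrow> 'a set" where
  "ann R x = {r \<in> carrier R. r \<otimes>\<^bsub>R\<^esub> x = \<zero>\<^bsub>R\<^esub>}"

definition Zstar :: "('a, 'b) ring_scheme \<Rightarrow> 'a set" where
  "Zstar R = {x \<in> carrier R. x \<noteq> \<zero>\<^bsub>R\<^esub> \<and>
      (\<exists>y \<in> carrier R. y \<noteq> \<zero>\<^bsub>R\<^esub> \<and> x \<otimes>\<^bsub>R\<^esub> y = \<zero>\<^bsub>R\<^esub>)}"

definition eclass :: "('a, 'b) ring_scheme \<Rightarrow> 'a \<Rightarrow> 'a set" where
  "eclass R x = {z \<in> carrier R. ann R z = ann R x}"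

definition EVerts :: "('a, 'b) ring_scheme \<Rightarrow> 'a set set" where
  "EVerts R = eclass R ` Zstar R"

definition EAdj :: "('a, 'b) ring_scheme \<Rightarrow> 'a set \<Rightarrow> 'a set \<Rightarrow> bool" where
  "EAdj R X Y \<longleftrightarrow> X \<in> EVerts R \<and> Y \<in> EVerts R \<and> X \<noteq> Y \<and>
      (\<exists>x \<in> X. \<exists>y \<in> Y. x \<otimes>\<^bsub>R\<^esub> y = \<zero>\<^bsub>R\<^esub>)"

definition ELeaf :: "('a, 'b) ring_scheme \<Rightarrow> 'a set \<Rightarrow> bool" where
  "ELeaf R X \<longleftrightarrow> X \<in> EVerts R \<and> card {Y. EAdj R X Y} = 1"

definition annFamily :: "('a, 'b) ring_scheme \<Rightarrow> 'a set set" where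
  "annFamily R = {ann R z | z. z \<in> carrier R \<and> z \<noteq> \<zero>\<^bsub>R\<^esub>}"

definition associated_prime :: "('a, 'b) ring_scheme \<Rightarrow> 'a set \<Rightarrow> bool" where
  "associated_prime R P \<longleftrightarrow> primeideal P R \<and> (\<exists>y \<in> carrier R. P = ann R y)"

end

theory Submission
  imports Defs
begin

lemma ann_ideal:
  fixes R (structure)
  assumes "cring R" and "y \<in> carrier R"
  shows "ideal (ann R y) R"
proof -
  interpret cring R by fact
  have sg: "additive_subgroup (ann R y) R"
  proof (rule additive_subgroupI)
    show "subgroup (ann R y) (add_monoid R)"
    proof
      show "ann R y \<subseteq> carrier (add_monoid R)" by (auto simp: ann_def)
      show "\<And>a b. a \<in> ann R y \<Longrightarrow> b \<in> ann R y \<Longrightarrow> a \<otimes>\<^bsub>add_monoid R\<^esub> b \<in> ann R y"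
        using assms(2) by (auto simp: ann_def l_distr)
      show "\<one>\<^bsub>add_monoid R\<^esub> \<in> ann R y" using assms(2) by (auto simp: ann_def)
      show "\<And>a. a \<in> ann R y \<Longrightarrow> inv\<^bsub>add_monoid R\<^esub> a \<in> ann R y"
        using assms(2) by (auto simp: ann_def a_inv_def[symmetric] l_minus)
    qed
  qed
  show ?thesis
  proof (rule idealI)
    show "ring R" by (rule ring_axioms)
    show "subgroup (ann R y) (add_monoid R)" using sg by (simp add: additive_subgroup_def)
    show "\<And>a x. a \<in> ann R y \<Longrightarrow> x \<in> carrier R \<Longrightarrow> x \<otimes> a \<in> ann R y"
      using assms(2) by (auto simp: ann_def m_assoc)
    show "\<And>a x. a \<in> ann R y \<Longrightarrow> x \<in> carrier R \<Longrightarrow> a \<otimes> x \<in> ann R y"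
    proof -
      fix a x assume a: "a \<in> ann R y" and x: "x \<in> carrier R"
      hence ac: "a \<in> carrier R" and ay: "a \<otimes> y = \<zero>" by (auto simp: ann_def)
      have "a \<otimes> x \<otimes> y = (a \<otimes> y) \<otimes> x"
        using ac x assms(2) by (metis m_assoc m_comm)
      thus "a \<otimes> x \<in> ann R y" using ay ac x by (simp add: ann_def)
    qed
  qed
qed

theorem corollary3p3:
  fixes R :: "('a, 'b) ring_scheme" (structure) and y :: 'a
  assumes "cring R" and "noetherian_ring R"
    and "\<exists>A B C. A \<in> EVerts R \<and> B \<in> EVerts R \<and> C \<in> EVerts R \<and>
                 A \<noteq> B \<and> A \<noteq> C \<and> B \<noteq> C"
    and "y \<in> Zstar R"
    and "\<exists>L. ELeaf R L \<and> EAdj R (eclass R y) L"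
  shows "ann R y \<in> annFamily R
       \<and> (\<forall>J \<in> annFamily R. ann R y \<subseteq> J \<longrightarrow> J = ann R y)
       \<and> associated_prime R (ann R y)"
proof -
  interpret cring R by fact
  have yc: "y \<in> carrier R" and y0: "y \<noteq> \<zero>" using assms(4) by (auto simp: Zstar_def)
  have eq_ann: "\<And>a b. a \<in> carrier R \<Longrightarrow> b \<in> carrier R \<Longrightarrow> eclass R a = eclass R b \<longleftrightarrow> ann R a = ann R b"
    unfolding eclass_def by blast
  have annI: "\<And>r a. r \<in> carrier R \<Longrightarrow> r \<otimes> a = \<zero> \<Longrightarrow> r \<in> ann R a" by (simp add: ann_def)
  have annD: "\<And>r a. r \<in> ann R a \<Longrightarrow> r \<in> carrier R \<and> r \<otimes> a = \<zero>" by (simp add: ann_def)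
  obtain L where leaf: "ELeaf R L" and adj: "EAdj R (eclass R y) L" using assms(5) by blast
  obtain x where xZ: "x \<in> Zstar R" and Lx: "L = eclass R x" using leaf by (auto simp: ELeaf_def EVerts_def)
  have xc: "x \<in> carrier R" and x0: "x \<noteq> \<zero>" using xZ by (auto simp: Zstar_def)
  obtain y1 x2 where y1: "y1 \<in> eclass R y" and x2: "x2 \<in> L" and y1x2: "y1 \<otimes> x2 = \<zero>"
    using adj by (auto simp: EAdj_def)
  have y1c: "y1 \<in> carrier R" "ann R y1 = ann R y" using y1 by (auto simp: eclass_def)
  have x2c: "x2 \<in> carrier R" "ann R x2 = ann R x" using x2 Lx by (auto simp: eclass_def)
  have "x2 \<in> ann R y" using y1c x2c y1x2 annI m_comm by metis
  hence x2y: "x2 \<otimes> y = \<zero>" by (simp add: ann_def)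
  have "y \<in> ann R x" using x2c(2)[symmetric] x2y yc x2c annI m_comm by metis
  hence yx: "y \<otimes> x = \<zero>" by (simp add: ann_def)
  have xy: "x \<otimes> y = \<zero>" using yx m_comm xc yc by metis
  have x_in_anny: "x \<in> ann R y" using xy xc by (simp add: ann_def)
  have neq: "ann R x \<noteq> ann R y"
    using adj Lx eq_ann xc yc by (auto simp: EAdj_def)
  have nbr: "{Y. EAdj R L Y} = {eclass R y}"
  proof -
    have "x2 \<otimes> y1 = \<zero>" using y1x2 m_comm y1c x2c by metis
    hence sym: "EAdj R L (eclass R y)" using adj x2 y1 unfolding EAdj_def by blast
    have "card {Y. EAdj R L Y} = 1" using leaf by (simp add: ELeaf_def)
    then obtain Y where "{Y. EAdj R L Y} = {Y}" using card_1_singletonE by blast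
    thus ?thesis using sym by auto
  qed
  have N: "\<And>w. w \<in> carrier R \<Longrightarrow> w \<noteq> \<zero> \<Longrightarrow> w \<otimes> x = \<zero> \<Longrightarrow> ann R w = ann R x \<or> ann R w = ann R y"
  proof -
    fix w assume wc: "w \<in> carrier R" and w0: "w \<noteq> \<zero>" and wx: "w \<otimes> x = \<zero>"
    show "ann R w = ann R x \<or> ann R w = ann R y"
    proof (cases "ann R w = ann R x")
      case False
      have wZ: "w \<in> Zstar R" using wc w0 wx xc x0 by (auto simp: Zstar_def)
      have "EAdj R L (eclass R w)"
        unfolding EAdj_def
      proof (intro conjI)
        show "L \<in> EVerts R" using leaf by (simp add: ELeaf_def)
        show "eclass R w \<in> EVerts R" using wZ by (simp add: EVerts_def)
        show "L \<noteq> eclass R w" using False Lx eq_ann wc xc by auto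
        have "x \<in> L" "w \<in> eclass R w" using Lx xc wc by (auto simp: eclass_def)
        moreover have "x \<otimes> w = \<zero>" using wx m_comm wc xc by metis
        ultimately show "\<exists>a\<in>L. \<exists>b\<in>eclass R w. a \<otimes> b = \<zero>" by blast
      qed
      hence "eclass R w = eclass R y" using nbr by auto
      thus ?thesis using eq_ann wc yc by auto
    qed simp
  qed
  have maxi: "\<And>z. z \<in> carrier R \<Longrightarrow> z \<noteq> \<zero> \<Longrightarrow> ann R y \<subseteq> ann R z \<Longrightarrow> ann R z = ann R y"
  proof -
    fix z assume zc: "z \<in> carrier R" and z0: "z \<noteq> \<zero>" and sub: "ann R y \<subseteq> ann R z"
    have "x \<otimes> z = \<zero>" using sub x_in_anny by (auto simp: ann_def)
    hence "z \<otimes> x = \<zero>" using m_comm xc zc by metis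
    from N[OF zc z0 this] show "ann R z = ann R y"
    proof
      assume zx: "ann R z = ann R x"
      hence sub2: "ann R y \<subseteq> ann R x" using sub by simp
      obtain A B C where ABC: "A \<in> EVerts R" "B \<in> EVerts R" "C \<in> EVerts R" "A \<noteq> B" "A \<noteq> C" "B \<noteq> C"
        using assms(3) by blast
      have "\<exists>D \<in> EVerts R. D \<noteq> eclass R x \<and> D \<noteq> eclass R y" using ABC by metis
      then obtain c where cZ: "c \<in> Zstar R" and cnx: "eclass R c \<noteq> eclass R x" and cny: "eclass R c \<noteq> eclass R y"
        by (auto simp: EVerts_def)
      have cc: "c \<in> carrier R" and c0: "c \<noteq> \<zero>" using cZ by (auto simp: Zstar_def)
      have cnx': "ann R c \<noteq> ann R x" and cny': "ann R c \<noteq> ann R y" using cnx cny eq_ann cc xc yc by auto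
      have cx: "c \<otimes> x \<noteq> \<zero>" using N[OF cc c0] cnx' cny' by blast
      obtain d where dc: "d \<in> carrier R" and d0: "d \<noteq> \<zero>" and cd: "c \<otimes> d = \<zero>" using cZ by (auto simp: Zstar_def)
      have xx: "x \<otimes> x = \<zero>" using sub2 x_in_anny by (auto simp: ann_def)
      define w where "w = (if d \<otimes> x = \<zero> then d else d \<otimes> x)"
      have wc: "w \<in> carrier R" and w0: "w \<noteq> \<zero>" using dc xc d0 by (auto simp: w_def)
      have wx: "w \<otimes> x = \<zero>" using xx dc xc by (auto simp: w_def m_assoc)
      have cw: "c \<otimes> w = \<zero>" using cd dc xc cc by (auto simp: w_def m_assoc[symmetric])
      have "c \<in> ann R w" using cw cc by (simp add: ann_def)
      hence "c \<in> ann R x" using N[OF wc w0 wx] sub2 by auto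
      hence "c \<otimes> x = \<zero>" by (simp add: ann_def)
      with cx show ?thesis by simp
    qed
  qed
  have fam: "ann R y \<in> annFamily R" using yc y0 by (auto simp: annFamily_def)
  have max2: "\<forall>J \<in> annFamily R. ann R y \<subseteq> J \<longrightarrow> J = ann R y"
    using maxi by (auto simp: annFamily_def)
  have prime: "primeideal (ann R y) R"
  proof (rule primeidealI)
    show "ideal (ann R y) R" by (rule ann_ideal[OF assms(1) yc])
    show "cring R" by fact
    have "\<one> \<notin> ann R y" using yc y0 by (simp add: ann_def)
    thus "carrier R \<noteq> ann R y" by auto
    fix a b assume ac: "a \<in> carrier R" and bc: "b \<in> carrier R" and ab: "a \<otimes> b \<in> ann R y"
    show "a \<in> ann R y \<or> b \<in> ann R y"
    proof (cases "a \<in> ann R y")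
      case True thus ?thesis by simp
    next
      case False
      hence na: "a \<notin> ann R y" .
      hence ay0: "a \<otimes> y \<noteq> \<zero>" using ac by (simp add: ann_def)
      have ayc: "a \<otimes> y \<in> carrier R" using ac yc by simp
      have "ann R y \<subseteq> ann R (a \<otimes> y)"
      proof
        fix r assume "r \<in> ann R y"
        hence rc: "r \<in> carrier R" and ry: "r \<otimes> y = \<zero>" by (auto simp: ann_def)
        have "r \<otimes> (a \<otimes> y) = a \<otimes> (r \<otimes> y)" using rc ac yc by (metis m_assoc m_comm)
        thus "r \<in> ann R (a \<otimes> y)" using ry rc ac by (simp add: ann_def)
      qed
      hence e: "ann R (a \<otimes> y) = ann R y" using maxi[OF ayc ay0] by simp
      have "b \<otimes> (a \<otimes> y) = (a \<otimes> b) \<otimes> y" using ac bc yc by (metis m_assoc m_comm)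
      also have "\<dots> = \<zero>" using ab by (simp add: ann_def)
      finally have "b \<in> ann R (a \<otimes> y)" using bc by (simp add: ann_def)
      thus ?thesis using e by simp
    qed
  qed
  show ?thesis using fam max2 prime yc by (auto simp: associated_prime_def)
qed

end
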